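(* In the linear regression setting of the context, let $q\ge2$, let $s_d$ be as in the context and $s_d^*=s_d/(s_d-1)$, and set $L_{s,q}:=\big\||\bm x|_s|\bm x|_{s^*}\big\|_q$ (with $1/s+1/s^*=1$). (i) If there is $K>0$ with $\|\bm u^\top\bm x\|_{\psi_2}\le K|\bm u|_2$ for all $\bm u\in\mathbb R^d$, then $L_{s_d,q}=O(d\sqrt{\log d})$. (ii) If there is $K>0$ with $\|\bm u^\top\bm x\|_{\psi_1}\le K|\bm u|_2$ for all $\bm u\in\mathbb R^d$, then $L_{s_d,q}=O(d\log d)$. (iii) If there are $p\ge2q$ and $K_p<\infty$ with $\mathbb E|x_j|^p\le K_p$ for all $1\le j\le d$, then $L_{s_d,q}=O(d^{1+\frac{1}{2q}})$. (iv) In each of the cases (i)–(iii), $L_{2,q}=O(d)$. Here the implied constants depend only on $q$ and $K$ (resp. $K_p$, $p$), not on $d$.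
   Context: Linear regression setting: $(\bm x,y)$ is a generic sample with $\bm x=(x_1,\ldots,x_d)^\top\in\mathbb R^d$ random and $y=\bm x^\top\boldsymbol\beta^*+\epsilon$, where $\epsilon$ is independent of $\bm x$, $\mathbb E\epsilon=0$, $\mathbb E|\epsilon|^q<\infty$. The loss is $g(\boldsymbol\beta,(\bm x,y))=\frac12(y-\bm x^\top\boldsymbol\beta)^2$ with gradient $\nabla g(\boldsymbol\beta,(\bm x,y))=-(y-\bm x^\top\boldsymbol\beta)\bm x$; with $L_{s,q}=\||\bm x|_s|\bm x|_{s^*}\|_q$ one has $\||\nabla g(\boldsymbol\beta,\cdot)-\nabla g(\boldsymbol\beta',\cdot)|_s\|_q\le L_{s,q}|\boldsymbol\beta-\boldsymbol\beta'|_s$. Notation: $|\bm v|_s=(\sum_i|v_i|^s)^{1/s}$, $\|X\|_q=(\mathbb E|X|^q)^{1/q}$; $s_d:=2\min\{\ell\in\mathbb N:2\ell>\log d\}$. Sub-Gaussian norm $\|v\|_{\psi_2}=\inf\{t>0:\mathbb Ee^{v^2/t^2}\le2\}$; sub-exponential norm $\|v\|_{\psi_1}=\inf\{t>0:\mathbb Ee^{|v|/t}\le2\}$. *)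

theory Defs
  imports "HOL-Probability.Probability"
begin

text \<open>l_s norm of the first d coordinates of v (vectors in R^d are nat => real, indices 0..<d).\<close>
definition lnorm :: "real \<Rightarrow> nat \<Rightarrow> (nat \<Rightarrow> real) \<Rightarrow> real" where
  "lnorm s d v = (\<Sum>i<d. \<bar>v i\<bar> powr s) powr (1 / s)"

definition conj_exp :: "real \<Rightarrow> real" where
  "conj_exp s = s / (s - 1)"

definition Lq_norm :: "'a measure \<Rightarrow> real \<Rightarrow> ('a \<Rightarrow> real) \<Rightarrow> ennreal" where
  "Lq_norm M q Y = (let I = (\<integral>\<^sup>+ \<omega>. ennreal (\<bar>Y \<omega>\<bar> powr q) \<partial>M) in
     if I = \<infinity> then \<infinity> else ennreal (enn2real I powr (1 / q)))"

text \<open>Sub-Gaussian and sub-exponential Orlicz norms (infimum over the empty set is infinity).\<close>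
definition psi2_norm :: "'a measure \<Rightarrow> ('a \<Rightarrow> real) \<Rightarrow> ereal" where
  "psi2_norm M Y = (INF t \<in> {t::real. t > 0 \<and>
      (\<integral>\<^sup>+ \<omega>. ennreal (exp ((Y \<omega>)\<^sup>2 / t\<^sup>2)) \<partial>M) \<le> 2}. ereal t)"

definition psi1_norm :: "'a measure \<Rightarrow> ('a \<Rightarrow> real) \<Rightarrow> ereal" where
  "psi1_norm M Y = (INF t \<in> {t::real. t > 0 \<and>
      (\<integral>\<^sup>+ \<omega>. ennreal (exp (\<bar>Y \<omega>\<bar> / t)) \<partial>M) \<le> 2}. ereal t)"

definition s_d :: "nat \<Rightarrow> real" where
  "s_d d = 2 * real (LEAST l::nat. 2 * real l > ln (real d))"

definition L_sq :: "'a measure \<Rightarrow> nat \<Rightarrow> ('a \<Rightarrow> nat \<Rightarrow> real) \<Rightarrow> real \<Rightarrow> real \<Rightarrow> ennreal" where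
  "L_sq M d X s q = Lq_norm M q (\<lambda>\<omega>. lnorm s d (X \<omega>) * lnorm (conj_exp s) d (X \<omega>))"

definition dotd :: "nat \<Rightarrow> (nat \<Rightarrow> real) \<Rightarrow> (nat \<Rightarrow> real) \<Rightarrow> real" where
  "dotd d u v = (\<Sum>i<d. u i * v i)"

text \<open>The sample space is fixed to nat => real, which
  suffices since every quantity depends only on the law of x.\<close>
definition rand_vec :: "(nat \<Rightarrow> real) measure \<Rightarrow> nat \<Rightarrow> ((nat \<Rightarrow> real) \<Rightarrow> nat \<Rightarrow> real) \<Rightarrow> bool" where
  "rand_vec M d X \<longleftrightarrow> prob_space M \<and> (\<forall>j<d. (\<lambda>\<omega>. X \<omega> j) \<in> borel_measurable M)"

definition subgauss_cond :: "(nat \<Rightarrow> real) measure \<Rightarrow> nat \<Rightarrow> ((nat \<Rightarrow> real) \<Rightarrow> nat \<Rightarrow> real) \<Rightarrow> real \<Rightarrow> bool" where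
  "subgauss_cond M d X K \<longleftrightarrow>
     (\<forall>u. psi2_norm M (\<lambda>\<omega>. dotd d u (X \<omega>)) \<le> ereal (K * lnorm 2 d u))"

definition subexp_cond :: "(nat \<Rightarrow> real) measure \<Rightarrow> nat \<Rightarrow> ((nat \<Rightarrow> real) \<Rightarrow> nat \<Rightarrow> real) \<Rightarrow> real \<Rightarrow> bool" where
  "subexp_cond M d X K \<longleftrightarrow>
     (\<forall>u. psi1_norm M (\<lambda>\<omega>. dotd d u (X \<omega>)) \<le> ereal (K * lnorm 2 d u))"

definition moment_cond :: "(nat \<Rightarrow> real) measure \<Rightarrow> nat \<Rightarrow> ((nat \<Rightarrow> real) \<Rightarrow> nat \<Rightarrow> real) \<Rightarrow> real \<Rightarrow> real \<Rightarrow> bool" where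
  "moment_cond M d X p Kp \<longleftrightarrow>
     (\<forall>j<d. (\<integral>\<^sup>+ \<omega>. ennreal (\<bar>X \<omega> j\<bar> powr p) \<partial>M) \<le> ennreal Kp)"

end

theory Submission
  imports Defs
begin

lemma power_mean:
  fixes a :: "nat \<Rightarrow> real"
  assumes r: "r \<ge> 1" and nn: "\<And>i. i < d \<Longrightarrow> a i \<ge> 0"
  shows "(\<Sum>i<d. a i) powr r \<le> real d powr (r - 1) * (\<Sum>i<d. a i powr r)"
proof -
  define I where "I = {i. i < d \<and> a i > 0}"
  have fI: "finite I" unfolding I_def by auto
  have sumI: "(\<Sum>i<d. a i) = (\<Sum>i\<in>I. a i)"
  proof -
    have sub: "I \<subseteq> {..<d}" by (auto simp: I_def)
    have "(\<Sum>i<d. a i) = (\<Sum>i\<in>I. a i) + (\<Sum>i\<in>{..<d}-I. a i)"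
      using sum.subset_diff[OF sub, of a] by simp
    moreover have "(\<Sum>i\<in>{..<d}-I. a i) = 0"
      by (rule sum.neutral) (use nn in \<open>force simp: I_def\<close>)
    ultimately show ?thesis by simp
  qed
  have sumI2: "(\<Sum>i\<in>I. a i powr r) \<le> (\<Sum>i<d. a i powr r)"
    by (rule sum_mono2) (auto simp: I_def)
  show ?thesis
  proof (cases "I = {}")
    case True
    then show ?thesis using sumI by (simp add: sum_nonneg)
  next
    case False
    define n where "n = card I"
    have n0: "n > 0" unfolding n_def using False fI by (simp add: card_gt_0_iff)
    have nd: "n \<le> d" unfolding n_def
      proof -
      have "I \<subseteq> {..<d}" by (auto simp: I_def)
      thus "card I \<le> d" using card_mono[of "{..<d}" I] by simp
    qed
    have "(\<lambda>x. x powr r) (\<Sum>i\<in>I. (1 / real n) *\<^sub>R a i) \<le> (\<Sum>i\<in>I. (1/ real n) * (\<lambda>x. x powr r) (a i))"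
    proof -
      have w: "(\<Sum>i\<in>I. 1 / real n) = 1" using n0 by (simp add: n_def)
      have pos: "\<And>i. i \<in> I \<Longrightarrow> a i \<in> {0<..}" by (simp add: I_def)
      show ?thesis
        using convex_on_sum[OF fI False powr_convex[OF r], of "\<lambda>i. 1/real n" a] w pos by simp
    qed
    hence "((\<Sum>i\<in>I. a i) / n) powr r \<le> (\<Sum>i\<in>I. a i powr r) / n"
      by (simp add: sum_divide_distrib[symmetric] sum_distrib_left[symmetric])
    hence "(\<Sum>i\<in>I. a i) powr r / n powr r \<le> (\<Sum>i\<in>I. a i powr r) / n"
      by (simp add: powr_divide sum_nonneg I_def)
    hence "(\<Sum>i\<in>I. a i) powr r \<le> n powr r * ((\<Sum>i\<in>I. a i powr r) / n)"
      using n0 by (simp add: divide_le_eq mult.commute)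
    also have "\<dots> = n powr (r - 1) * (\<Sum>i\<in>I. a i powr r)"
      using n0 by (simp add: powr_diff)
    also have "\<dots> \<le> real d powr (r - 1) * (\<Sum>i<d. a i powr r)"
      by (intro mult_mono powr_mono2 sumI2) (use r nd in \<open>auto intro: sum_nonneg\<close>)
    finally show ?thesis using sumI by simp
  qed
qed

lemma lnorm_le_max:
  assumes r: "r > 0" and m: "\<And>i. i < d \<Longrightarrow> \<bar>v i\<bar> \<le> m" and d: "d \<ge> 1"
  shows "lnorm r d v \<le> real d powr (1 / r) * m"
proof -
  have m0: "m \<ge> 0" using m[of 0] d by auto
  have "(\<Sum>i<d. \<bar>v i\<bar> powr r) \<le> (\<Sum>i<d. m powr r)"
    by (intro sum_mono powr_mono2) (use r m in auto)
  also have "\<dots> = real d * m powr r" by simp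
  finally have "lnorm r d v \<le> (real d * m powr r) powr (1/r)"
    unfolding lnorm_def by (intro powr_mono2) (use r in \<open>auto intro: sum_nonneg\<close>)
  also have "\<dots> = real d powr (1/r) * m"
    using r m0 by (simp add: powr_mult powr_powr)
  finally show ?thesis .
qed

lemma lnorm_le_l1:
  assumes r: "r \<ge> 1"
  shows "lnorm r d v \<le> (\<Sum>i<d. \<bar>v i\<bar>)"
proof -
  define S where "S = (\<Sum>i<d. \<bar>v i\<bar>)"
  have S0: "S \<ge> 0" unfolding S_def by (auto intro: sum_nonneg)
  show ?thesis
  proof (cases "S = 0")
    case True
    hence "\<forall>i<d. v i = 0" unfolding S_def by (simp add: sum_nonneg_eq_0_iff)
    thus ?thesis using True r by (simp add: lnorm_def S_def)
  next
    case False
    hence Sp: "S > 0" using S0 by auto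
    have le: "\<bar>v i\<bar> \<le> S" if "i < d" for i
      unfolding S_def by (rule member_le_sum) (use that in auto)
    have "(\<Sum>i<d. \<bar>v i\<bar> powr r) = (\<Sum>i<d. S powr r * (\<bar>v i\<bar>/S) powr r)"
      using Sp by (intro sum.cong) (auto simp: powr_divide)
    also have "\<dots> \<le> (\<Sum>i<d. S powr r * (\<bar>v i\<bar>/S))"
    proof (intro sum_mono mult_left_mono)
      fix i assume "i \<in> {..<d}"
      hence "\<bar>v i\<bar>/S \<le> 1" using le Sp by auto
      thus "(\<bar>v i\<bar>/S) powr r \<le> \<bar>v i\<bar>/S"
        using powr_mono'[of 1 r "\<bar>v i\<bar>/S"] r Sp by simp
    qed simp
    also have "\<dots> = S powr r"
      using Sp by (simp add: sum_distrib_left[symmetric] sum_divide_distrib[symmetric] S_def)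
    finally have "lnorm r d v \<le> (S powr r) powr (1/r)"
      unfolding lnorm_def by (intro powr_mono2) (use r in \<open>auto intro: sum_nonneg\<close>)
    thus ?thesis using r S0 by (simp add: powr_powr S_def)
  qed
qed


lemma int_lin:
  fixes g f1 :: "'a \<Rightarrow> real" and f2 :: "nat \<Rightarrow> 'a \<Rightarrow> real"
  assumes m1: "f1 \<in> borel_measurable M" and m2: "\<And>j. j \<in> J \<Longrightarrow> f2 j \<in> borel_measurable M"
    and J: "finite J" and a: "a \<ge> 0" and b: "b \<ge> 0"
    and pt: "\<And>\<omega>. \<omega> \<in> space M \<Longrightarrow> g \<omega> \<le> a * f1 \<omega> + b * (\<Sum>j\<in>J. f2 j \<omega>)"
    and n1: "\<And>\<omega>. f1 \<omega> \<ge> 0" and n2: "\<And>j \<omega>. f2 j \<omega> \<ge> 0"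
    and c1: "(\<integral>\<^sup>+\<omega>. ennreal (f1 \<omega>) \<partial>M) \<le> ennreal c1"
    and c2: "\<And>j. j \<in> J \<Longrightarrow> (\<integral>\<^sup>+\<omega>. ennreal (f2 j \<omega>) \<partial>M) \<le> ennreal c2"
    and c1p: "c1 \<ge> 0" and c2p: "c2 \<ge> 0"
  shows "(\<integral>\<^sup>+\<omega>. ennreal (g \<omega>) \<partial>M) \<le> ennreal (a * c1 + b * (real (card J) * c2))"
proof -
  have "(\<integral>\<^sup>+\<omega>. ennreal (g \<omega>) \<partial>M) \<le> (\<integral>\<^sup>+\<omega>. ennreal a * ennreal (f1 \<omega>) + ennreal b * (\<Sum>j\<in>J. ennreal (f2 j \<omega>)) \<partial>M)"
  proof (rule nn_integral_mono)
    fix \<omega> assume "\<omega> \<in> space M"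
    hence "ennreal (g \<omega>) \<le> ennreal (a * f1 \<omega> + b * (\<Sum>j\<in>J. f2 j \<omega>))"
      using pt by (rule_tac ennreal_leI) auto
    also have "\<dots> = ennreal a * ennreal (f1 \<omega>) + ennreal b * (\<Sum>j\<in>J. ennreal (f2 j \<omega>))"
      using a b n1 n2 by (simp add: ennreal_mult sum_nonneg)
    finally show "ennreal (g \<omega>) \<le> ennreal a * ennreal (f1 \<omega>) + ennreal b * (\<Sum>j\<in>J. ennreal (f2 j \<omega>))" .
  qed
  also have "\<dots> = ennreal a * (\<integral>\<^sup>+\<omega>. ennreal (f1 \<omega>) \<partial>M) + ennreal b * (\<Sum>j\<in>J. (\<integral>\<^sup>+\<omega>. ennreal (f2 j \<omega>) \<partial>M))"
    using m1 m2 by (simp add: nn_integral_add nn_integral_cmult nn_integral_sum)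
  also have "\<dots> \<le> ennreal a * ennreal c1 + ennreal b * (\<Sum>j\<in>J. ennreal c2)"
    by (intro add_mono mult_left_mono sum_mono c1 c2) auto
  also have "\<dots> = ennreal (a * c1 + b * (real (card J) * c2))"
    using a b c1p c2p by (simp add: ennreal_mult ennreal_of_nat_eq_real_of_nat)
  finally show ?thesis .
qed

lemma Lq_from_bound:
  assumes q: "q > 0" and c: "c \<ge> 0"
    and I: "(\<integral>\<^sup>+\<omega>. ennreal (\<bar>Y \<omega>\<bar> powr q) \<partial>M) \<le> ennreal c"
  shows "Lq_norm M q Y \<le> ennreal (c powr (1/q))"
proof -
  define I where "I = (\<integral>\<^sup>+\<omega>. ennreal (\<bar>Y \<omega>\<bar> powr q) \<partial>M)"
  have fin: "I \<noteq> \<infinity>" using I unfolding I_def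
    by (metis ennreal_neq_top infinity_ennreal_def neq_top_trans)
  have "enn2real I \<le> c" using I c unfolding I_def by (intro enn2real_leI) auto
  hence "enn2real I powr (1/q) \<le> c powr (1/q)" using q by (intro powr_mono2) auto
  thus ?thesis unfolding Lq_norm_def Let_def I_def[symmetric] using fin by (simp add: ennreal_leI)
qed


definition Mv :: "nat \<Rightarrow> (nat \<Rightarrow> real) \<Rightarrow> real" where
  "Mv d v = Max ((\<lambda>i. \<bar>v i\<bar>) ` {..<d})"

lemma Mv_ge: "i < d \<Longrightarrow> \<bar>v i\<bar> \<le> Mv d v"
  unfolding Mv_def by (rule Max_ge) auto

lemma Mv_in: "d \<ge> 1 \<Longrightarrow> \<exists>i<d. Mv d v = \<bar>v i\<bar>"
proof -
  assume "d \<ge> 1"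
  hence "0 \<in> {..<d}" by simp
  hence "(\<lambda>i. \<bar>v i\<bar>) ` {..<d} \<noteq> {}" by blast
  from Max_in[OF _ this] show ?thesis unfolding Mv_def by auto
qed

lemma Mv_nonneg: "d \<ge> 1 \<Longrightarrow> Mv d v \<ge> 0"
  by (metis Mv_in abs_ge_zero)

lemma Mv_powr: "d \<ge> 1 \<Longrightarrow> Mv d v powr r \<le> (\<Sum>i<d. \<bar>v i\<bar> powr r)"
proof -
  assume d: "d \<ge> 1"
  then obtain i where i: "i < d" "Mv d v = \<bar>v i\<bar>" using Mv_in by blast
  have "\<bar>v i\<bar> powr r \<le> (\<Sum>i<d. \<bar>v i\<bar> powr r)"
    by (rule member_le_sum[where f = "\<lambda>i. \<bar>v i\<bar> powr r"]) (use i in auto)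
  thus ?thesis using i by simp
qed

lemma amgm: fixes x y mu :: real assumes "mu > 0" "x \<ge> 0" "y \<ge> 0"
  shows "x * y \<le> mu * x^2 + y^2 / mu"
proof -
  have e: "(mu*x - y)^2 = (mu*x)^2 - 2*mu*(x*y) + y^2" by (simp add: power2_diff algebra_simps)
  have "0 \<le> (mu*x - y)^2" by simp
  hence "2 * mu * (x*y) \<le> (mu*x)^2 + y^2" using e by linarith
  hence "2 * (x * y) \<le> mu * x^2 + y^2 / mu" using assms
    by (simp add: field_simps power2_eq_square)
  moreover have "x*y \<ge> 0" using assms by simp
  ultimately show ?thesis by linarith
qed

lemma pointwise:
  assumes d: "d \<ge> 1" and s: "s > 1" and ds: "real d powr (1/s) \<le> exp 1" and q: "q \<ge> 1" and mu: "mu > 0"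
  shows "\<bar>lnorm s d v * lnorm (conj_exp s) d v\<bar> powr q \<le>
     exp q * (mu * Mv d v powr (2*q) + real d powr (2*q - 1) / mu * (\<Sum>i<d. \<bar>v i\<bar> powr (2*q)))"
proof -
  define m where "m = Mv d v"
  define S where "S = (\<Sum>i<d. \<bar>v i\<bar>)"
  have m0: "m \<ge> 0" using Mv_nonneg[OF d] m_def by simp
  have S0: "S \<ge> 0" unfolding S_def by (auto intro: sum_nonneg)
  have l1: "lnorm s d v \<le> exp 1 * m"
  proof -
    have "lnorm s d v \<le> real d powr (1/s) * m"
      by (rule lnorm_le_max) (use s d Mv_ge m_def in auto)
    also have "\<dots> \<le> exp 1 * m" using ds m0 by (intro mult_right_mono) auto
    finally show ?thesis .
  qed
  have cs: "conj_exp s \<ge> 1" using s unfolding conj_exp_def by simp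
  have l2: "lnorm (conj_exp s) d v \<le> S" unfolding S_def by (rule lnorm_le_l1[OF cs])
  have n1: "lnorm s d v \<ge> 0" and n2: "lnorm (conj_exp s) d v \<ge> 0" unfolding lnorm_def by auto
  have "\<bar>lnorm s d v * lnorm (conj_exp s) d v\<bar> \<le> exp 1 * m * S"
    using l1 l2 n1 n2 by (simp add: abs_mult mult_mono)
  hence "\<bar>lnorm s d v * lnorm (conj_exp s) d v\<bar> powr q \<le> (exp 1 * m * S) powr q"
    using q by (intro powr_mono2) auto
  also have "\<dots> = exp q * (m powr q * S powr q)"
    by (simp add: powr_mult exp_powr_real)
  also have "\<dots> \<le> exp q * (mu * (m powr q)^2 + (S powr q)^2 / mu)"
    using amgm[OF mu] by (intro mult_left_mono) auto
  also have "\<dots> = exp q * (mu * m powr (2*q) + S powr (2*q) / mu)"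
    by (simp add: power2_eq_square powr_add[symmetric])
  also have "\<dots> \<le> exp q * (mu * m powr (2*q) + (real d powr (2*q - 1) * (\<Sum>i<d. \<bar>v i\<bar> powr (2*q))) / mu)"
  proof -
    have "S powr (2*q) \<le> real d powr (2*q - 1) * (\<Sum>i<d. \<bar>v i\<bar> powr (2*q))"
      unfolding S_def by (rule power_mean) (use q in auto)
    thus ?thesis using mu by (intro mult_left_mono add_left_mono divide_right_mono) auto
  qed
  also have "\<dots> = exp q * (mu * Mv d v powr (2*q) + real d powr (2*q - 1) / mu * (\<Sum>i<d. \<bar>v i\<bar> powr (2*q)))"
    unfolding m_def by simp
  finally show ?thesis .
qed

lemma core:
  assumes meas: "\<And>j. j<d \<Longrightarrow> (\<lambda>\<omega>. X \<omega> j) \<in> borel_measurable M"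
   and d: "d \<ge> 1" and s: "s > 1" and ds: "real d powr (1/s) \<le> exp 1" and q: "q \<ge> 1"
   and R: "R > 0" and B: "B \<ge> 0"
   and hm: "h \<in> borel_measurable M" and hn: "\<And>\<omega>. h \<omega> \<ge> 0"
   and hM: "\<And>\<omega>. \<omega> \<in> space M \<Longrightarrow> Mv d (X \<omega>) powr (2*q) \<le> h \<omega>"
   and Eh: "(\<integral>\<^sup>+\<omega>. ennreal (h \<omega>) \<partial>M) \<le> ennreal (R powr (2*q))"
   and EA: "\<And>j. j<d \<Longrightarrow> (\<integral>\<^sup>+\<omega>. ennreal (\<bar>X \<omega> j\<bar> powr (2*q)) \<partial>M) \<le> ennreal B"
  shows "L_sq M d X s q \<le> ennreal (exp 1 * real d * R * (1+B) powr (1/q))"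
proof -
  define D where "D = real d"
  have D: "D > 0" using d D_def by simp
  define t where "t = D powr q"
  define u where "u = R powr q"
  have t: "t > 0" and u: "u > 0" using D R by (auto simp: t_def u_def)
  define mu where "mu = (D / R) powr q"
  have mu: "mu > 0" using D R mu_def by simp
  have mut: "mu = t / u" unfolding mu_def t_def u_def by (simp add: powr_divide)
  define a where "a = exp q * mu"
  define b where "b = exp q * (D powr (2*q - 1) / mu)"
  have a: "a \<ge> 0" and b: "b \<ge> 0" using mu by (auto simp: a_def b_def)
  have pt: "\<bar>lnorm s d (X \<omega>) * lnorm (conj_exp s) d (X \<omega>)\<bar> powr q \<le> a * h \<omega> + b * (\<Sum>j\<in>{..<d}. \<bar>X \<omega> j\<bar> powr (2*q))"
    if "\<omega> \<in> space M" for \<omega>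
  proof -
    have "\<bar>lnorm s d (X \<omega>) * lnorm (conj_exp s) d (X \<omega>)\<bar> powr q \<le>
      exp q * (mu * Mv d (X \<omega>) powr (2*q) + D powr (2*q - 1) / mu * (\<Sum>i<d. \<bar>X \<omega> i\<bar> powr (2*q)))"
      unfolding D_def by (rule pointwise[OF d s ds q mu])
    also have "\<dots> \<le> exp q * (mu * h \<omega> + D powr (2*q - 1) / mu * (\<Sum>i<d. \<bar>X \<omega> i\<bar> powr (2*q)))"
      using hM[OF that] mu by (intro mult_left_mono add_right_mono) auto
    finally show ?thesis by (simp add: a_def b_def algebra_simps)
  qed
  have m2: "(\<lambda>\<omega>. \<bar>X \<omega> j\<bar> powr (2*q)) \<in> borel_measurable M" if "j \<in> {..<d}" for j
  proof -
    have jd: "j < d" using that by simp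
    note mj[measurable] = meas[OF jd]
    show ?thesis by measurable
  qed
  have I: "(\<integral>\<^sup>+\<omega>. ennreal (\<bar>lnorm s d (X \<omega>) * lnorm (conj_exp s) d (X \<omega>)\<bar> powr q) \<partial>M)
     \<le> ennreal (a * R powr (2*q) + b * (real (card {..<d}) * B))"
    by (rule int_lin[OF hm m2 _ a b pt hn _ Eh EA]) (use B in auto)
  have c: "a * R powr (2*q) + b * (real (card {..<d}) * B) = exp q * t * u * (1 + B)"
  proof -
    have "R powr (2*q) = u * u" unfolding u_def by (simp add: powr_add[symmetric])
    moreover have "D powr (2*q - 1) * D = t * t"
    proof -
      have "D powr (2*q - 1) * D = D powr (2*q - 1) * D powr 1" using D by simp
      also have "\<dots> = D powr (2*q - 1 + 1)" by (rule powr_add[symmetric])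
      also have "\<dots> = D powr (2*q)" by simp
      also have "\<dots> = t * t" unfolding t_def by (simp add: powr_add[symmetric])
      finally show ?thesis .
    qed
    moreover have "real (card {..<d}) = D" by (simp add: D_def)
    ultimately show ?thesis using t u unfolding a_def b_def mut
      by (simp add: field_simps)
  qed
  have cpos: "exp q * t * u * (1 + B) \<ge> 0" using t u B by simp
  have L: "L_sq M d X s q \<le> ennreal ((exp q * t * u * (1 + B)) powr (1/q))"
    unfolding L_sq_def by (rule Lq_from_bound) (use q cpos I c in auto)
  have "(exp q * t * u * (1 + B)) powr (1/q) = exp 1 * D * R * (1+B) powr (1/q)"
    using q D R unfolding t_def u_def by (simp add: powr_mult exp_powr_real powr_powr)
  thus ?thesis using L D_def by simp
qed


lemma pow_le_exp: fixes y :: real assumes "y \<ge> 0" shows "y ^ n \<le> fact n * exp y"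
proof -
  have "(\<Sum>k\<in>{n}. inverse (fact k) * y^k) \<le> (\<Sum>k. inverse (fact k) * y^k)"
    using assms by (intro sum_le_suminf[OF summable_exp]) auto
  hence "inverse (fact n) * y^n \<le> exp y" by (simp add: exp_def)
  thus ?thesis by (simp add: field_simps)
qed

lemma powr_le_fact_exp:
  fixes y a :: real assumes y: "y \<ge> 0" and a: "0 \<le> a" "a \<le> real n"
  shows "y powr a \<le> 1 + fact n * exp y"
proof (cases "y \<le> 1")
  case True
  hence "y powr a \<le> 1" using y a by (intro powr_le1) auto
  moreover have "fact n * exp y \<ge> 0" by simp
  ultimately show ?thesis by linarith
next
  case False
  hence "y powr a \<le> y powr real n" using a by (intro powr_mono) auto
  also have "\<dots> = y ^ n" using False by (simp add: powr_realpow)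
  also have "\<dots> \<le> fact n * exp y" by (rule pow_le_exp) (use y in auto)
  finally show ?thesis by simp
qed

lemma mom_from_exp:
  assumes P: "prob_space M" and phim: "phi \<in> borel_measurable M"
    and E: "(\<integral>\<^sup>+\<omega>. ennreal (exp (phi \<omega>)) \<partial>M) \<le> 2"
    and c: "c \<ge> 0" and g: "\<And>\<omega>. \<omega> \<in> space M \<Longrightarrow> g \<omega> \<le> c * (1 + fact n * exp (phi \<omega>))"
  shows "(\<integral>\<^sup>+\<omega>. ennreal (g \<omega>) \<partial>M) \<le> ennreal (c * (1 + 2 * fact n))"
proof -
  have "(\<integral>\<^sup>+\<omega>. ennreal (g \<omega>) \<partial>M) \<le> ennreal ((c * fact n) * 2 + c * (real (card {0::nat}) * 1))"
  proof (rule int_lin[where ?f1.0 = "\<lambda>\<omega>. exp (phi \<omega>)" and ?f2.0 = "\<lambda>_ _. 1"])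
    show "(\<lambda>\<omega>. exp (phi \<omega>)) \<in> borel_measurable M" using phim by measurable
    show "(\<integral>\<^sup>+\<omega>. ennreal (exp (phi \<omega>)) \<partial>M) \<le> ennreal 2" using E by simp
    show "(\<integral>\<^sup>+\<omega>. ennreal 1 \<partial>M) \<le> ennreal 1" using prob_space.emeasure_space_1[OF P] by simp
    fix \<omega> assume "\<omega> \<in> space M"
    thus "g \<omega> \<le> c * fact n * exp (phi \<omega>) + c * (\<Sum>j\<in>{0::nat}. 1)" using g by (simp add: algebra_simps)
  qed (use c in auto)
  thus ?thesis by (simp add: algebra_simps)
qed

lemma unit_vec:
  assumes "j < d"
  shows "dotd d (\<lambda>i. if i = j then 1 else 0) v = v j" and "lnorm 2 d (\<lambda>i. if i = j then 1 else 0) = 1"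
proof -
  show "dotd d (\<lambda>i. if i = j then 1 else 0) v = v j"
  proof -
    have "(\<Sum>i<d. (if i = j then 1 else 0) * v i) = (\<Sum>i<d. if i = j then v i else 0)"
      by (intro sum.cong) auto
    thus ?thesis unfolding dotd_def using assms by simp
  qed
  have "(\<Sum>i<d. \<bar>if i = j then 1 else 0\<bar> powr 2) = (\<Sum>i<d. if i = j then (1::real) else 0)"
    by (intro sum.cong) auto
  also have "\<dots> = 1" using assms by (simp add: sum.delta)
  finally show "lnorm 2 d (\<lambda>i. if i = j then 1 else 0) = 1" unfolding lnorm_def by simp
qed

lemma subgauss_exp:
  assumes sg: "subgauss_cond M d X K" and K: "K > 0" and j: "j < d"
  shows "(\<integral>\<^sup>+\<omega>. ennreal (exp ((X \<omega> j)^2 / (2*K)^2)) \<partial>M) \<le> 2"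
proof -
  have "psi2_norm M (\<lambda>\<omega>. X \<omega> j) \<le> ereal K"
    using sg[unfolded subgauss_cond_def, rule_format, of "\<lambda>i. if i = j then 1 else 0"] unit_vec[OF j] by simp
  also have "\<dots> < ereal (2*K)" using K by simp
  finally obtain t where t: "t > 0" "(\<integral>\<^sup>+ \<omega>. ennreal (exp ((X \<omega> j)\<^sup>2 / t\<^sup>2)) \<partial>M) \<le> 2" "t < 2*K"
    unfolding psi2_norm_def INF_less_iff by auto
  have "(\<integral>\<^sup>+\<omega>. ennreal (exp ((X \<omega> j)^2 / (2*K)^2)) \<partial>M) \<le> (\<integral>\<^sup>+ \<omega>. ennreal (exp ((X \<omega> j)\<^sup>2 / t\<^sup>2)) \<partial>M)"
  proof (intro nn_integral_mono ennreal_leI)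
    fix \<omega>
    have "t^2 \<le> (2*K)^2" using t by (intro power_mono) auto
    hence "(X \<omega> j)^2 / (2*K)^2 \<le> (X \<omega> j)^2 / t^2" using t by (intro divide_left_mono) auto
    thus "exp ((X \<omega> j)^2 / (2*K)^2) \<le> exp ((X \<omega> j)^2 / t^2)" by simp
  qed
  thus ?thesis using t by simp
qed

lemma subexp_exp:
  assumes sg: "subexp_cond M d X K" and K: "K > 0" and j: "j < d"
  shows "(\<integral>\<^sup>+\<omega>. ennreal (exp (\<bar>X \<omega> j\<bar> / (2*K))) \<partial>M) \<le> 2"
proof -
  have "psi1_norm M (\<lambda>\<omega>. X \<omega> j) \<le> ereal K"
    using sg[unfolded subexp_cond_def, rule_format, of "\<lambda>i. if i = j then 1 else 0"] unit_vec[OF j] by simp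
  also have "\<dots> < ereal (2*K)" using K by simp
  finally obtain t where t: "t > 0" "(\<integral>\<^sup>+ \<omega>. ennreal (exp (\<bar>X \<omega> j\<bar> / t)) \<partial>M) \<le> 2" "t < 2*K"
    unfolding psi1_norm_def INF_less_iff by auto
  have "(\<integral>\<^sup>+\<omega>. ennreal (exp (\<bar>X \<omega> j\<bar> / (2*K))) \<partial>M) \<le> (\<integral>\<^sup>+ \<omega>. ennreal (exp (\<bar>X \<omega> j\<bar> / t)) \<partial>M)"
  proof (intro nn_integral_mono ennreal_leI)
    fix \<omega>
    have "\<bar>X \<omega> j\<bar> / (2*K) \<le> \<bar>X \<omega> j\<bar> / t" using t by (intro divide_left_mono) auto
    thus "exp (\<bar>X \<omega> j\<bar> / (2*K)) \<le> exp (\<bar>X \<omega> j\<bar> / t)" by simp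
  qed
  thus ?thesis using t by simp
qed


lemma sd_facts:
  assumes d: "d \<ge> 1"
  shows "\<exists>l::nat. s_d d = 2 * real l \<and> l \<ge> 1 \<and> 2 * real l > ln (real d) \<and> 2 * (real l - 1) \<le> ln (real d)"
proof -
  define P where "P = (\<lambda>l::nat. 2 * real l > ln (real d))"
  obtain n :: nat where n: "ln (real d) / 2 < real n" using reals_Archimedean2 by blast
  have Pn: "P n" unfolding P_def using n by simp
  define l where "l = (LEAST l. P l)"
  have Pl: "P l" unfolding l_def using LeastI[of P n] Pn by simp
  have ln0: "ln (real d) \<ge> 0" using d by simp
  have l1: "l \<ge> 1"
  proof (rule ccontr)
    assume "\<not> l \<ge> 1" hence "l = 0" by simp
    thus False using Pl ln0 unfolding P_def by simp
  qed
  have "\<not> P (l - 1)" unfolding l_def by (rule not_less_Least) (use l1 in \<open>simp add: l_def[symmetric]\<close>)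
  hence "2 * (real l - 1) \<le> ln (real d)" unfolding P_def using l1 by (simp add: of_nat_diff)
  moreover have "s_d d = 2 * real l" unfolding s_d_def l_def P_def by simp
  ultimately show ?thesis using Pl l1 unfolding P_def by blast
qed

lemma sd_props:
  assumes d: "d \<ge> 1"
  shows "s_d d > 1" and "real d powr (1 / s_d d) \<le> exp 1"
proof -
  obtain l :: nat where l: "s_d d = 2 * real l" "l \<ge> 1" "2 * real l > ln (real d)"
    using sd_facts[OF d] by blast
  show "s_d d > 1" using l by simp
  have "real d powr (1 / s_d d) = exp (ln (real d) / s_d d)"
    using d by (simp add: powr_def)
  also have "\<dots> \<le> exp 1" using l by simp
  finally show "real d powr (1 / s_d d) \<le> exp 1" .
qed

lemma trick:
  fixes m la a b :: real
  assumes m: "m \<ge> 0" and la: "la > 0" and a: "0 < a" "a \<le> b"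
  shows "m powr a \<le> la powr a + la powr (a - b) * m powr b"
proof (cases "m \<le> la")
  case True
  hence "m powr a \<le> la powr a" using m a by (intro powr_mono2) auto
  moreover have "la powr (a - b) * m powr b \<ge> 0" by simp
  ultimately show ?thesis by linarith
next
  case False
  have "m powr a = m powr (a - b + b)" by simp
  also have "\<dots> = m powr (a - b) * m powr b" by (rule powr_add)
  also have "\<dots> \<le> la powr (a - b) * m powr b"
    using False la a by (intro mult_right_mono powr_mono2') auto
  finally have "m powr a \<le> la powr (a - b) * m powr b" .
  moreover have "la powr a \<ge> 0" by simp
  ultimately show ?thesis by linarith
qed

lemma P_log:
  assumes P: "prob_space M" and meas: "\<And>j. j<d \<Longrightarrow> (\<lambda>\<omega>. X \<omega> j) \<in> borel_measurable M"
   and d: "d \<ge> 1" and q: "q \<ge> 1" and B: "B \<ge> 0"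
   and EA: "\<And>j. j<d \<Longrightarrow> (\<integral>\<^sup>+\<omega>. ennreal (\<bar>X \<omega> j\<bar> powr (2*q)) \<partial>M) \<le> ennreal B"
   and k: "k \<ge> 1" and kq: "real k \<ge> q" and kd: "2 * real k > ln (real d)"
   and G: "G > 0"
   and EK: "\<And>j. j<d \<Longrightarrow> (\<integral>\<^sup>+\<omega>. ennreal (\<bar>X \<omega> j\<bar> powr (2 * real k)) \<partial>M) \<le> ennreal (3 * G^(2*k))"
  shows "L_sq M d X (s_d d) q \<le> ennreal (exp 1 * real d * (4 * exp 1 * G) * (1+B) powr (1/q))"
proof -
  define la where "la = 2 * exp 1 * G"
  have la: "la > 0" using G la_def by simp
  define b where "b = 2 * real k"
  have b: "2*q \<le> b" "0 < 2*q" using kq q b_def by auto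
  define h where "h = (\<lambda>\<omega>. la powr (2*q) + la powr (2*q - b) * (\<Sum>j\<in>{..<d}. \<bar>X \<omega> j\<bar> powr b))"
  have m2: "(\<lambda>\<omega>. \<bar>X \<omega> j\<bar> powr b) \<in> borel_measurable M" if "j \<in> {..<d}" for j
  proof -
    have jd: "j < d" using that by simp
    note mj[measurable] = meas[OF jd]
    show ?thesis by measurable
  qed
  have hm: "h \<in> borel_measurable M" unfolding h_def
    using m2 by (intro borel_measurable_add borel_measurable_times borel_measurable_sum) auto
  have hn: "\<And>\<omega>. h \<omega> \<ge> 0" unfolding h_def by (intro add_nonneg_nonneg mult_nonneg_nonneg sum_nonneg) auto
  have hM: "Mv d (X \<omega>) powr (2*q) \<le> h \<omega>" for \<omega>
  proof -
    have "Mv d (X \<omega>) powr (2*q) \<le> la powr (2*q) + la powr (2*q - b) * Mv d (X \<omega>) powr b"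
      by (rule trick[OF Mv_nonneg[OF d] la b(2) b(1)])
    also have "\<dots> \<le> h \<omega>" unfolding h_def
      by (intro add_left_mono mult_left_mono Mv_powr[OF d]) auto
    finally show ?thesis .
  qed
  have lab: "real d * (3 * G^(2*k)) \<le> la powr b"
  proof -
    have "la powr b = la ^ (2*k)" unfolding b_def using la by (simp add: powr_realpow[symmetric])
    also have "\<dots> = 4^k * exp 1 ^ (2*k) * G^(2*k)" unfolding la_def
      by (simp add: power_mult_distrib power_mult)
    finally have e: "la powr b = 4^k * exp 1 ^ (2*k) * G^(2*k)" .
    have "real d = exp (ln (real d))" using d by simp
    also have "\<dots> \<le> exp (real (2*k) * 1)" using kd by simp
    also have "\<dots> = exp 1 ^ (2*k)" by (rule exp_of_nat_mult)
    finally have d1: "real d \<le> exp 1 ^ (2*k)" .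
    have "(4::real)^1 \<le> 4^k" by (rule power_increasing) (use k in auto)
    hence "(3::real) \<le> 4^k" by simp
    hence "real d * 3 \<le> exp 1 ^ (2*k) * 4^k" using d1 by (intro mult_mono) auto
    hence "(real d * 3) * G^(2*k) \<le> (exp 1 ^ (2*k) * 4^k) * G^(2*k)" by (rule mult_right_mono) simp
    moreover have "real d * (3 * G^(2*k)) = (real d * 3) * G^(2*k)" by simp
    moreover have "4^k * exp 1 ^ (2*k) * G^(2*k) = (exp 1 ^ (2*k) * 4^k) * G^(2*k)" by simp
    ultimately show ?thesis unfolding e by linarith
  qed
  have Eh: "(\<integral>\<^sup>+\<omega>. ennreal (h \<omega>) \<partial>M) \<le> ennreal ((2*la) powr (2*q))"
  proof -
    have "(\<integral>\<^sup>+\<omega>. ennreal (h \<omega>) \<partial>M) \<le> ennreal (la powr (2*q) * 1 + la powr (2*q - b) * (real (card {..<d}) * (3 * G^(2*k))))"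
    proof (rule int_lin[where ?f1.0 = "\<lambda>_. 1" and ?f2.0 = "\<lambda>j \<omega>. \<bar>X \<omega> j\<bar> powr b"])
      show "(\<integral>\<^sup>+\<omega>. ennreal 1 \<partial>M) \<le> ennreal 1" using prob_space.emeasure_space_1[OF P] by simp
      show "\<And>j. j \<in> {..<d} \<Longrightarrow> (\<integral>\<^sup>+\<omega>. ennreal (\<bar>X \<omega> j\<bar> powr b) \<partial>M) \<le> ennreal (3 * G^(2*k))"
        using EK unfolding b_def by simp
    qed (use m2 G in \<open>auto simp: h_def\<close>)
    also have "\<dots> \<le> ennreal (la powr (2*q) + la powr (2*q - b) * la powr b)"
      using lab by (intro ennreal_leI) (simp add: mult_left_mono)
    also have "la powr (2*q - b) * la powr b = la powr (2*q)" by (simp add: powr_add[symmetric])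
    also have "la powr (2*q) + la powr (2*q) \<le> (2*la) powr (2*q)"
    proof -
      have "(2::real) \<le> 2 powr (2*q)"
        using powr_mono[of 1 "2*q" 2] q by simp
      hence "2 * la powr (2*q) \<le> 2 powr (2*q) * la powr (2*q)" by (intro mult_right_mono) auto
      thus ?thesis by (simp add: powr_mult)
    qed
    finally show ?thesis by (simp add: ennreal_leI)
  qed
  have "L_sq M d X (s_d d) q \<le> ennreal (exp 1 * real d * (2*la) * (1+B) powr (1/q))"
    by (rule core[OF meas d sd_props[OF d] q _ B hm hn hM Eh EA]) (use la in auto)
  thus ?thesis unfolding la_def by (simp add: algebra_simps)
qed


lemma P_iii:
  assumes meas: "\<And>j. j<d \<Longrightarrow> (\<lambda>\<omega>. X \<omega> j) \<in> borel_measurable M"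
   and d: "d \<ge> 1" and q: "q \<ge> 1" and B: "B \<ge> 1"
   and EA: "\<And>j. j<d \<Longrightarrow> (\<integral>\<^sup>+\<omega>. ennreal (\<bar>X \<omega> j\<bar> powr (2*q)) \<partial>M) \<le> ennreal B"
  shows "L_sq M d X (s_d d) q \<le> ennreal (exp 1 * B powr (1/(2*q)) * (1+B) powr (1/q) * real d powr (1 + 1/(2*q)))"
proof -
  define h where "h = (\<lambda>\<omega>. (\<Sum>j\<in>{..<d}. \<bar>X \<omega> j\<bar> powr (2*q)))"
  have m2: "(\<lambda>\<omega>. \<bar>X \<omega> j\<bar> powr (2*q)) \<in> borel_measurable M" if "j \<in> {..<d}" for j
  proof -
    have jd: "j < d" using that by simp
    note mj[measurable] = meas[OF jd]
    show ?thesis by measurable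
  qed
  have hm: "h \<in> borel_measurable M" unfolding h_def
    using m2 by (intro borel_measurable_sum) auto
  have hn: "\<And>\<omega>. h \<omega> \<ge> 0" unfolding h_def by (intro sum_nonneg) auto
  have hM: "Mv d (X \<omega>) powr (2*q) \<le> h \<omega>" for \<omega>
    unfolding h_def using Mv_powr[OF d] by simp
  define R where "R = (real d * B) powr (1/(2*q))"
  have dB: "real d * B > 0" using d B by simp
  have R: "R > 0" using d B by (simp add: R_def)
  have R2: "R powr (2*q) = real d * B" unfolding R_def using q dB by (simp add: powr_powr)
  have Eh: "(\<integral>\<^sup>+\<omega>. ennreal (h \<omega>) \<partial>M) \<le> ennreal (R powr (2*q))"
  proof -
    have "(\<integral>\<^sup>+\<omega>. ennreal (h \<omega>) \<partial>M) \<le> ennreal (0 * 0 + 1 * (real (card {..<d}) * B))"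
    proof (rule int_lin[where ?f1.0 = "\<lambda>_. 0" and ?f2.0 = "\<lambda>j \<omega>. \<bar>X \<omega> j\<bar> powr (2*q)"])
      show "\<And>j. j \<in> {..<d} \<Longrightarrow> (\<integral>\<^sup>+\<omega>. ennreal (\<bar>X \<omega> j\<bar> powr (2*q)) \<partial>M) \<le> ennreal B"
        using EA by simp
    qed (use m2 B in \<open>auto simp: h_def\<close>)
    thus ?thesis using R2 by simp
  qed
  have "L_sq M d X (s_d d) q \<le> ennreal (exp 1 * real d * R * (1+B) powr (1/q))"
    by (rule core[OF meas d sd_props[OF d] q R _ hm hn hM Eh EA]) (use B in auto)
  also have "exp 1 * real d * R * (1+B) powr (1/q) = exp 1 * B powr (1/(2*q)) * (1+B) powr (1/q) * real d powr (1 + 1/(2*q))"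
  proof -
    have "real d * R = real d powr 1 * (real d powr (1/(2*q)) * B powr (1/(2*q)))"
      unfolding R_def using d by (simp add: powr_mult)
    also have "\<dots> = real d powr (1 + 1/(2*q)) * B powr (1/(2*q))"
      by (simp only: powr_add mult.assoc)
    finally show ?thesis by (simp add: algebra_simps)
  qed
  finally show ?thesis .
qed

lemma P_iv:
  assumes meas: "\<And>j. j<d \<Longrightarrow> (\<lambda>\<omega>. X \<omega> j) \<in> borel_measurable M"
   and d: "d \<ge> 1" and q: "q \<ge> 1" and B: "B \<ge> 0"
   and EA: "\<And>j. j<d \<Longrightarrow> (\<integral>\<^sup>+\<omega>. ennreal (\<bar>X \<omega> j\<bar> powr (2*q)) \<partial>M) \<le> ennreal B"
  shows "L_sq M d X 2 q \<le> ennreal (B powr (1/q) * real d)"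
proof -
  have m2: "(\<lambda>\<omega>. \<bar>X \<omega> j\<bar> powr (2*q)) \<in> borel_measurable M" if "j \<in> {..<d}" for j
  proof -
    have jd: "j < d" using that by simp
    note mj[measurable] = meas[OF jd]
    show ?thesis by measurable
  qed
  have ce: "conj_exp 2 = 2" unfolding conj_exp_def by simp
  have pt: "\<bar>lnorm 2 d v * lnorm (conj_exp 2) d v\<bar> powr q \<le> 0 * 0 + real d powr (q - 1) * (\<Sum>j\<in>{..<d}. \<bar>v j\<bar> powr (2*q))" for v
  proof -
    define T where "T = (\<Sum>i<d. \<bar>v i\<bar> powr 2)"
    have T: "T \<ge> 0" unfolding T_def by (intro sum_nonneg) auto
    have "lnorm 2 d v * lnorm (conj_exp 2) d v = T powr (1/2) * T powr (1/2)"
      unfolding ce lnorm_def T_def by simp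
    also have "\<dots> = T" using T by (simp add: powr_add[symmetric])
    finally have e: "\<bar>lnorm 2 d v * lnorm (conj_exp 2) d v\<bar> powr q = T powr q" using T by simp
    have "T powr q \<le> real d powr (q - 1) * (\<Sum>i<d. (\<bar>v i\<bar> powr 2) powr q)"
      unfolding T_def by (rule power_mean) (use q in auto)
    also have "(\<Sum>i<d. (\<bar>v i\<bar> powr 2) powr q) = (\<Sum>i<d. \<bar>v i\<bar> powr (2*q))"
      by (simp only: powr_powr)
    finally show ?thesis using e by simp
  qed
  have I: "(\<integral>\<^sup>+\<omega>. ennreal (\<bar>lnorm 2 d (X \<omega>) * lnorm (conj_exp 2) d (X \<omega>)\<bar> powr q) \<partial>M)
     \<le> ennreal (0 * 0 + real d powr (q - 1) * (real (card {..<d}) * B))"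
    by (rule int_lin[where ?f1.0 = "\<lambda>_. 0" and ?f2.0 = "\<lambda>j \<omega>. \<bar>X \<omega> j\<bar> powr (2*q)", OF _ m2 _ _ _ pt _ _ _ EA])
       (use B in auto)
  have c: "0 * 0 + real d powr (q - 1) * (real (card {..<d}) * B) = real d powr q * B"
  proof -
    have "real d powr (q - 1) * real d = real d powr (q - 1) * real d powr 1" using d by simp
    also have "\<dots> = real d powr (q - 1 + 1)" by (rule powr_add[symmetric])
    finally have c0: "real d powr (q - 1) * real d = real d powr q" by simp
    have "real d powr (q - 1) * (real d * B) = real d powr q * B" by (metis c0 mult.assoc)
    thus ?thesis by simp
  qed
  have "L_sq M d X 2 q \<le> ennreal ((real d powr q * B) powr (1/q))"
  proof -
    have I2: "(\<integral>\<^sup>+\<omega>. ennreal (\<bar>lnorm 2 d (X \<omega>) * lnorm (conj_exp 2) d (X \<omega>)\<bar> powr q) \<partial>M)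
       \<le> ennreal (real d powr q * B)" using I unfolding c .
    show ?thesis unfolding L_sq_def by (rule Lq_from_bound[OF _ _ I2]) (use q B in auto)
  qed
  also have "(real d powr q * B) powr (1/q) = B powr (1/q) * real d"
    using q d by (simp add: powr_mult powr_powr)
  finally show ?thesis .
qed


lemma ln2_half: "ln (2::real) \<ge> 1/2"
proof -
  have "ln (1/2::real) \<le> 1/2 - 1" by (rule ln_le_minus_one) simp
  thus ?thesis by (simp add: ln_div)
qed

lemma sg_mom:
  assumes P: "prob_space M" and mj: "(\<lambda>\<omega>. X \<omega> j) \<in> borel_measurable M"
    and sg: "subgauss_cond M d X K" and K: "K > 0" and j: "j < d" and r: "r > 0" "r \<le> 2 * real n"
  shows "(\<integral>\<^sup>+\<omega>. ennreal (\<bar>X \<omega> j\<bar> powr r) \<partial>M) \<le> ennreal ((2*K) powr r * (1 + 2 * fact n))"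
proof (rule mom_from_exp[OF P _ subgauss_exp[OF sg K j]])
  show "(\<lambda>\<omega>. (X \<omega> j)^2 / (2*K)^2) \<in> borel_measurable M" using mj by measurable
  show "(2*K) powr r \<ge> 0" by simp
  fix \<omega>
  define y where "y = \<bar>X \<omega> j\<bar> / (2*K)"
  have y: "y \<ge> 0" using K y_def by simp
  have phi: "(X \<omega> j)^2 / (2*K)^2 = y powr 2" using y by (simp add: y_def power_divide)
  have "\<bar>X \<omega> j\<bar> powr r = (2*K) powr r * y powr r"
    using K by (simp add: y_def powr_divide)
  also have "y powr r = (y powr 2) powr (r/2)" by (simp add: powr_powr)
  also have "(y powr 2) powr (r/2) \<le> 1 + fact n * exp (y powr 2)"
    by (rule powr_le_fact_exp) (use r in auto)
  finally show "\<bar>X \<omega> j\<bar> powr r \<le> (2*K) powr r * (1 + fact n * exp ((X \<omega> j)^2 / (2*K)^2))"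
    unfolding phi by (simp add: mult_left_mono)
qed

lemma se_mom:
  assumes P: "prob_space M" and mj: "(\<lambda>\<omega>. X \<omega> j) \<in> borel_measurable M"
    and sg: "subexp_cond M d X K" and K: "K > 0" and j: "j < d" and r: "r > 0" "r \<le> real n"
  shows "(\<integral>\<^sup>+\<omega>. ennreal (\<bar>X \<omega> j\<bar> powr r) \<partial>M) \<le> ennreal ((2*K) powr r * (1 + 2 * fact n))"
proof (rule mom_from_exp[OF P _ subexp_exp[OF sg K j]])
  show "(\<lambda>\<omega>. \<bar>X \<omega> j\<bar> / (2*K)) \<in> borel_measurable M" using mj by measurable
  show "(2*K) powr r \<ge> 0" by simp
  fix \<omega>
  define y where "y = \<bar>X \<omega> j\<bar> / (2*K)"
  have y: "y \<ge> 0" using K y_def by simp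
  have "\<bar>X \<omega> j\<bar> powr r = (2*K) powr r * y powr r"
    using K by (simp add: y_def powr_divide)
  also have "y powr r \<le> 1 + fact n * exp y"
    by (rule powr_le_fact_exp) (use r y in auto)
  finally show "\<bar>X \<omega> j\<bar> powr r \<le> (2*K) powr r * (1 + fact n * exp (\<bar>X \<omega> j\<bar> / (2*K)))"
    unfolding y_def by (simp add: mult_left_mono)
qed

lemma mc_mom:
  assumes P: "prob_space M" and mj: "(\<lambda>\<omega>. X \<omega> j) \<in> borel_measurable M"
    and mc: "moment_cond M d X p Kp" and j: "j < d" and q: "q > 0" and p: "p \<ge> 2*q"
  shows "(\<integral>\<^sup>+\<omega>. ennreal (\<bar>X \<omega> j\<bar> powr (2*q)) \<partial>M) \<le> ennreal (1 + max Kp 0)"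
proof -
  have "(\<integral>\<^sup>+\<omega>. ennreal (\<bar>X \<omega> j\<bar> powr (2*q)) \<partial>M) \<le> ennreal (1 * 1 + 1 * (real (card {j}) * max Kp 0))"
  proof (rule int_lin[where ?f1.0 = "\<lambda>_. 1" and ?f2.0 = "\<lambda>_ \<omega>. \<bar>X \<omega> j\<bar> powr p"])
    show "(\<integral>\<^sup>+\<omega>. ennreal 1 \<partial>M) \<le> ennreal 1" using prob_space.emeasure_space_1[OF P] by simp
    show "(\<lambda>\<omega>. \<bar>X \<omega> j\<bar> powr p) \<in> borel_measurable M" if "i \<in> {j}" for i using mj by measurable
    show "(\<integral>\<^sup>+\<omega>. ennreal (\<bar>X \<omega> j\<bar> powr p) \<partial>M) \<le> ennreal (max Kp 0)" if "i \<in> {j}" for i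
    proof -
      have "(\<integral>\<^sup>+\<omega>. ennreal (\<bar>X \<omega> j\<bar> powr p) \<partial>M) \<le> ennreal Kp"
        using mc j unfolding moment_cond_def by blast
      also have "\<dots> \<le> ennreal (max Kp 0)" by (intro ennreal_leI) simp
      finally show ?thesis .
    qed
    fix \<omega>
    have eqs: "1 * 1 + 1 * (\<Sum>i\<in>{j}. \<bar>X \<omega> j\<bar> powr p) = 1 + \<bar>X \<omega> j\<bar> powr p" by simp
    have nn: "\<bar>X \<omega> j\<bar> powr p \<ge> 0" by simp
    show "\<bar>X \<omega> j\<bar> powr (2*q) \<le> 1 * 1 + 1 * (\<Sum>i\<in>{j}. \<bar>X \<omega> j\<bar> powr p)"
    proof (cases "\<bar>X \<omega> j\<bar> \<le> 1")
      case True
      hence "\<bar>X \<omega> j\<bar> powr (2*q) \<le> 1" using q by (intro powr_le1) auto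
      thus ?thesis using nn eqs by linarith
    next
      case False
      hence "\<bar>X \<omega> j\<bar> powr (2*q) \<le> \<bar>X \<omega> j\<bar> powr p" using p by (intro powr_mono) auto
      thus ?thesis using eqs by linarith
    qed
  qed auto
  thus ?thesis by simp
qed


lemma lnd_half: assumes "d \<ge> (2::nat)" shows "ln (real d) \<ge> 1/2"
proof -
  have "ln (2::real) \<le> ln (real d)" using assms by (subst ln_le_cancel_iff) auto
  thus ?thesis using ln2_half by linarith
qed

lemma k_bound:
  assumes d: "d \<ge> (2::nat)" and l: "2 * (real l - 1) \<le> ln (real d)"
  shows "real (l + n) \<le> (5/2 + 2 * real n) * ln (real d)"
proof -
  have lnd: "ln (real d) \<ge> 1/2" by (rule lnd_half[OF d])
  have "(2 + 2 * real n) * (1/2) \<le> (2 + 2 * real n) * ln (real d)"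
    using lnd by (intro mult_left_mono) auto
  hence h1: "1 + real n \<le> 2 * ln (real d) + 2 * (real n * ln (real d))" by (simp add: algebra_simps)
  have h2: "(5/2 + 2 * real n) * ln (real d) = 5/2 * ln (real d) + 2 * (real n * ln (real d))"
    by (simp add: algebra_simps)
  show ?thesis using h1 h2 l by simp
qed

lemma part_i:
  assumes q: "q \<ge> 2" and K: "K > 0"
  shows "\<exists>C. \<forall>d M X. d \<ge> 2 \<longrightarrow> rand_vec M d X \<longrightarrow> subgauss_cond M d X K \<longrightarrow>
        L_sq M d X (s_d d) q \<le> ennreal (C * real d * sqrt (ln (real d)))"
proof -
  define ka where "ka = 2*K"
  have ka: "ka > 0" using K ka_def by simp
  define n where "n = nat \<lceil>q\<rceil>"
  have nq: "q \<le> real n" unfolding n_def by (rule real_nat_ceiling_ge)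
  define B where "B = ka powr (2*q) * (1 + 2 * fact n)"
  have B: "B \<ge> 0" unfolding B_def by simp
  define c0 where "c0 = 5/2 + 2 * real n"
  define C where "C = exp 1 * (4 * exp 1 * ka) * (1+B) powr (1/q) * sqrt c0"
  show ?thesis
  proof (intro exI[of _ C] allI impI)
    fix d M X assume d: "d \<ge> (2::nat)" and rv: "rand_vec M d X" and sg: "subgauss_cond M d X K"
    have P: "prob_space M" and meas: "\<And>j. j<d \<Longrightarrow> (\<lambda>\<omega>. X \<omega> j) \<in> borel_measurable M"
      using rv unfolding rand_vec_def by auto
    have d1: "d \<ge> 1" using d by simp
    obtain l :: nat where l: "s_d d = 2 * real l" "l \<ge> 1" "2 * real l > ln (real d)" "2 * (real l - 1) \<le> ln (real d)"
      using sd_facts[OF d1] by blast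
    define k where "k = l + n"
    have k1: "k \<ge> 1" using l k_def by simp
    have kq: "real k \<ge> q" using nq k_def by simp
    have kd: "2 * real k > ln (real d)" using l k_def by simp
    have EA: "(\<integral>\<^sup>+\<omega>. ennreal (\<bar>X \<omega> j\<bar> powr (2*q)) \<partial>M) \<le> ennreal B" if j: "j < d" for j
      unfolding B_def ka_def by (rule sg_mom[OF P meas[OF j] sg K j]) (use q nq in auto)
    define G where "G = ka * sqrt (real k)"
    have G: "G > 0" using ka k1 by (simp add: G_def)
    have EK: "(\<integral>\<^sup>+\<omega>. ennreal (\<bar>X \<omega> j\<bar> powr (2 * real k)) \<partial>M) \<le> ennreal (3 * G^(2*k))" if j: "j < d" for j
    proof -
      have X1: "(\<integral>\<^sup>+\<omega>. ennreal (\<bar>X \<omega> j\<bar> powr (2 * real k)) \<partial>M) \<le> ennreal (ka powr (2 * real k) * (1 + 2 * fact k))"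
        unfolding ka_def by (rule sg_mom[OF P meas[OF j] sg K j]) (use k1 in auto)
      have "ka powr (2 * real k) * (1 + 2 * fact k) \<le> 3 * G^(2*k)"
      proof -
        have kp: "ka powr (2 * real k) = ka^(2*k)" using ka by (simp add: powr_realpow[symmetric])
        have f1: "(1::real) \<le> fact k" by simp
        have f2: "(fact k :: real) \<le> real k ^ k" using fact_le_power[of k] by simp
        have "1 + 2 * fact k \<le> 3 * (real k)^k" using f1 f2 by linarith
        hence "ka^(2*k) * (1 + 2 * fact k) \<le> ka^(2*k) * (3 * real k ^ k)"
          by (intro mult_left_mono) (use ka in auto)
        also have "\<dots> = 3 * G^(2*k)" unfolding G_def
          by (simp add: power_mult_distrib power_mult)
        finally show ?thesis using kp by simp
      qed
      thus ?thesis using X1 by (meson ennreal_leI order_trans)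
    qed
    have L: "L_sq M d X (s_d d) q \<le> ennreal (exp 1 * real d * (4 * exp 1 * G) * (1+B) powr (1/q))"
      by (rule P_log[OF P meas d1 _ B EA k1 kq kd G EK]) (use q in auto)
    have kc: "real k \<le> c0 * ln (real d)" unfolding k_def c0_def by (rule k_bound[OF d l(4)])
    have sk: "sqrt (real k) \<le> sqrt c0 * sqrt (ln (real d))"
      using kc by (simp add: real_sqrt_mult[symmetric])
    have e1: "exp 1 * real d * (4 * exp 1 * G) * (1+B) powr (1/q) = (exp 1 * (4 * exp 1 * ka) * (1+B) powr (1/q) * real d) * sqrt (real k)"
      unfolding G_def by (simp add: algebra_simps)
    have e2: "C * real d * sqrt (ln (real d)) = (exp 1 * (4 * exp 1 * ka) * (1+B) powr (1/q) * real d) * (sqrt c0 * sqrt (ln (real d)))"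
      unfolding C_def by (simp add: algebra_simps)
    have "exp 1 * real d * (4 * exp 1 * G) * (1+B) powr (1/q) \<le> C * real d * sqrt (ln (real d))"
      unfolding e1 e2 using sk ka by (intro mult_left_mono) auto
    thus "L_sq M d X (s_d d) q \<le> ennreal (C * real d * sqrt (ln (real d)))"
      using L by (meson ennreal_leI order_trans)
  qed
qed

lemma part_ii:
  assumes q: "q \<ge> 2" and K: "K > 0"
  shows "\<exists>C. \<forall>d M X. d \<ge> 2 \<longrightarrow> rand_vec M d X \<longrightarrow> subexp_cond M d X K \<longrightarrow>
        L_sq M d X (s_d d) q \<le> ennreal (C * real d * ln (real d))"
proof -
  define ka where "ka = 2*K"
  have ka: "ka > 0" using K ka_def by simp
  define n where "n = nat \<lceil>2*q\<rceil>"
  have nq: "2*q \<le> real n" unfolding n_def by (rule real_nat_ceiling_ge)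
  define B where "B = ka powr (2*q) * (1 + 2 * fact n)"
  have B: "B \<ge> 0" unfolding B_def by simp
  define c0 where "c0 = 5/2 + 2 * real n"
  define C where "C = exp 1 * (4 * exp 1 * ka) * (1+B) powr (1/q) * (2 * c0)"
  show ?thesis
  proof (intro exI[of _ C] allI impI)
    fix d M X assume d: "d \<ge> (2::nat)" and rv: "rand_vec M d X" and sg: "subexp_cond M d X K"
    have P: "prob_space M" and meas: "\<And>j. j<d \<Longrightarrow> (\<lambda>\<omega>. X \<omega> j) \<in> borel_measurable M"
      using rv unfolding rand_vec_def by auto
    have d1: "d \<ge> 1" using d by simp
    obtain l :: nat where l: "s_d d = 2 * real l" "l \<ge> 1" "2 * real l > ln (real d)" "2 * (real l - 1) \<le> ln (real d)"
      using sd_facts[OF d1] by blast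
    define k where "k = l + n"
    have k1: "k \<ge> 1" using l k_def by simp
    have kq: "real k \<ge> q" using nq q k_def by simp
    have kd: "2 * real k > ln (real d)" using l k_def by simp
    have EA: "(\<integral>\<^sup>+\<omega>. ennreal (\<bar>X \<omega> j\<bar> powr (2*q)) \<partial>M) \<le> ennreal B" if j: "j < d" for j
      unfolding B_def ka_def by (rule se_mom[OF P meas[OF j] sg K j]) (use q nq in auto)
    define G where "G = ka * (2 * real k)"
    have G: "G > 0" using ka k1 by (simp add: G_def)
    have EK: "(\<integral>\<^sup>+\<omega>. ennreal (\<bar>X \<omega> j\<bar> powr (2 * real k)) \<partial>M) \<le> ennreal (3 * G^(2*k))" if j: "j < d" for j
    proof -
      have X1: "(\<integral>\<^sup>+\<omega>. ennreal (\<bar>X \<omega> j\<bar> powr (2 * real k)) \<partial>M) \<le> ennreal (ka powr (2 * real k) * (1 + 2 * fact (2*k)))"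
        unfolding ka_def by (rule se_mom[OF P meas[OF j] sg K j]) (use k1 in auto)
      have "ka powr (2 * real k) * (1 + 2 * fact (2*k)) \<le> 3 * G^(2*k)"
      proof -
        have kp: "ka powr (2 * real k) = ka^(2*k)" using ka by (simp add: powr_realpow[symmetric])
        have f1: "(1::real) \<le> fact (2*k)" by simp
        have f2: "(fact (2*k) :: real) \<le> (2 * real k) ^ (2*k)" using fact_le_power[of "2*k"] by simp
        have "1 + 2 * fact (2*k) \<le> 3 * (2 * real k)^(2*k)" using f1 f2 by linarith
        hence "ka^(2*k) * (1 + 2 * fact (2*k)) \<le> ka^(2*k) * (3 * (2 * real k) ^ (2*k))"
          by (intro mult_left_mono) (use ka in auto)
        also have "\<dots> = 3 * G^(2*k)" unfolding G_def
          by (simp add: power_mult_distrib)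
        finally show ?thesis using kp by simp
      qed
      thus ?thesis using X1 by (meson ennreal_leI order_trans)
    qed
    have L: "L_sq M d X (s_d d) q \<le> ennreal (exp 1 * real d * (4 * exp 1 * G) * (1+B) powr (1/q))"
      by (rule P_log[OF P meas d1 _ B EA k1 kq kd G EK]) (use q in auto)
    have kc: "real k \<le> c0 * ln (real d)" unfolding k_def c0_def by (rule k_bound[OF d l(4)])
    have sk: "2 * real k \<le> 2 * c0 * ln (real d)" using kc by simp
    have e1: "exp 1 * real d * (4 * exp 1 * G) * (1+B) powr (1/q) = (exp 1 * (4 * exp 1 * ka) * (1+B) powr (1/q) * real d) * (2 * real k)"
      unfolding G_def by (simp add: algebra_simps)
    have e2: "C * real d * ln (real d) = (exp 1 * (4 * exp 1 * ka) * (1+B) powr (1/q) * real d) * (2 * c0 * ln (real d))"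
      unfolding C_def by (simp add: algebra_simps)
    have "exp 1 * real d * (4 * exp 1 * G) * (1+B) powr (1/q) \<le> C * real d * ln (real d)"
      unfolding e1 e2 using sk ka by (intro mult_left_mono) auto
    thus "L_sq M d X (s_d d) q \<le> ennreal (C * real d * ln (real d))"
      using L by (meson ennreal_leI order_trans)
  qed
qed

lemma part_iii:
  assumes q: "q \<ge> 2" and p: "p \<ge> 2 * q"
  shows "\<exists>C. \<forall>d M X. d \<ge> 1 \<longrightarrow> rand_vec M d X \<longrightarrow> moment_cond M d X p Kp \<longrightarrow>
        L_sq M d X (s_d d) q \<le> ennreal (C * real d powr (1 + 1 / (2 * q)))"
proof -
  define B where "B = 1 + max Kp 0"
  have B: "B \<ge> 1" unfolding B_def by simp
  show ?thesis
  proof (intro exI[of _ "exp 1 * B powr (1/(2*q)) * (1+B) powr (1/q)"] allI impI)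
    fix d M X assume d: "d \<ge> (1::nat)" and rv: "rand_vec M d X" and mc: "moment_cond M d X p Kp"
    have P: "prob_space M" and meas: "\<And>j. j<d \<Longrightarrow> (\<lambda>\<omega>. X \<omega> j) \<in> borel_measurable M"
      using rv unfolding rand_vec_def by auto
    have EA: "(\<integral>\<^sup>+\<omega>. ennreal (\<bar>X \<omega> j\<bar> powr (2*q)) \<partial>M) \<le> ennreal B" if j: "j < d" for j
      unfolding B_def by (rule mc_mom[OF P meas[OF j] mc j]) (use q p in auto)
    show "L_sq M d X (s_d d) q \<le> ennreal (exp 1 * B powr (1/(2*q)) * (1+B) powr (1/q) * real d powr (1 + 1 / (2 * q)))"
      by (rule P_iii[OF meas d _ B EA]) (use q in auto)
  qed
qed

lemma part_iv_sg:
  assumes q: "q \<ge> 2" and K: "K > 0"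
  shows "\<exists>C. \<forall>d M X. d \<ge> 1 \<longrightarrow> rand_vec M d X \<longrightarrow> subgauss_cond M d X K \<longrightarrow>
        L_sq M d X 2 q \<le> ennreal (C * real d)"
proof -
  define n where "n = nat \<lceil>q\<rceil>"
  have nq: "q \<le> real n" unfolding n_def by (rule real_nat_ceiling_ge)
  define B where "B = (2*K) powr (2*q) * (1 + 2 * fact n)"
  have B: "B \<ge> 0" unfolding B_def by simp
  show ?thesis
  proof (intro exI[of _ "B powr (1/q)"] allI impI)
    fix d M X assume d: "d \<ge> (1::nat)" and rv: "rand_vec M d X" and sg: "subgauss_cond M d X K"
    have P: "prob_space M" and meas: "\<And>j. j<d \<Longrightarrow> (\<lambda>\<omega>. X \<omega> j) \<in> borel_measurable M"
      using rv unfolding rand_vec_def by auto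
    have EA: "(\<integral>\<^sup>+\<omega>. ennreal (\<bar>X \<omega> j\<bar> powr (2*q)) \<partial>M) \<le> ennreal B" if j: "j < d" for j
      unfolding B_def by (rule sg_mom[OF P meas[OF j] sg K j]) (use q nq in auto)
    show "L_sq M d X 2 q \<le> ennreal (B powr (1/q) * real d)"
      by (rule P_iv[OF meas d _ B EA]) (use q in auto)
  qed
qed

lemma part_iv_se:
  assumes q: "q \<ge> 2" and K: "K > 0"
  shows "\<exists>C. \<forall>d M X. d \<ge> 1 \<longrightarrow> rand_vec M d X \<longrightarrow> subexp_cond M d X K \<longrightarrow>
        L_sq M d X 2 q \<le> ennreal (C * real d)"
proof -
  define n where "n = nat \<lceil>2*q\<rceil>"
  have nq: "2*q \<le> real n" unfolding n_def by (rule real_nat_ceiling_ge)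
  define B where "B = (2*K) powr (2*q) * (1 + 2 * fact n)"
  have B: "B \<ge> 0" unfolding B_def by simp
  show ?thesis
  proof (intro exI[of _ "B powr (1/q)"] allI impI)
    fix d M X assume d: "d \<ge> (1::nat)" and rv: "rand_vec M d X" and sg: "subexp_cond M d X K"
    have P: "prob_space M" and meas: "\<And>j. j<d \<Longrightarrow> (\<lambda>\<omega>. X \<omega> j) \<in> borel_measurable M"
      using rv unfolding rand_vec_def by auto
    have EA: "(\<integral>\<^sup>+\<omega>. ennreal (\<bar>X \<omega> j\<bar> powr (2*q)) \<partial>M) \<le> ennreal B" if j: "j < d" for j
      unfolding B_def by (rule se_mom[OF P meas[OF j] sg K j]) (use q nq in auto)
    show "L_sq M d X 2 q \<le> ennreal (B powr (1/q) * real d)"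
      by (rule P_iv[OF meas d _ B EA]) (use q in auto)
  qed
qed

lemma part_iv_mc:
  assumes q: "q \<ge> 2" and p: "p \<ge> 2 * q"
  shows "\<exists>C. \<forall>d M X. d \<ge> 1 \<longrightarrow> rand_vec M d X \<longrightarrow> moment_cond M d X p Kp \<longrightarrow>
        L_sq M d X 2 q \<le> ennreal (C * real d)"
proof -
  define B where "B = 1 + max Kp 0"
  have B: "B \<ge> 0" unfolding B_def by simp
  show ?thesis
  proof (intro exI[of _ "B powr (1/q)"] allI impI)
    fix d M X assume d: "d \<ge> (1::nat)" and rv: "rand_vec M d X" and mc: "moment_cond M d X p Kp"
    have P: "prob_space M" and meas: "\<And>j. j<d \<Longrightarrow> (\<lambda>\<omega>. X \<omega> j) \<in> borel_measurable M"
      using rv unfolding rand_vec_def by auto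
    have EA: "(\<integral>\<^sup>+\<omega>. ennreal (\<bar>X \<omega> j\<bar> powr (2*q)) \<partial>M) \<le> ennreal B" if j: "j < d" for j
      unfolding B_def by (rule mc_mom[OF P meas[OF j] mc j]) (use q p in auto)
    show "L_sq M d X 2 q \<le> ennreal (B powr (1/q) * real d)"
      by (rule P_iv[OF meas d _ B EA]) (use q in auto)
  qed
qed

theorem mainTheorem12:
  shows
   "(\<forall>q K. q \<ge> 2 \<longrightarrow> K > 0 \<longrightarrow> (\<exists>C. \<forall>d M X. d \<ge> 2 \<longrightarrow> rand_vec M d X \<longrightarrow> subgauss_cond M d X K \<longrightarrow>
        L_sq M d X (s_d d) q \<le> ennreal (C * real d * sqrt (ln (real d)))))
  \<and> (\<forall>q K. q \<ge> 2 \<longrightarrow> K > 0 \<longrightarrow> (\<exists>C. \<forall>d M X. d \<ge> 2 \<longrightarrow> rand_vec M d X \<longrightarrow> subexp_cond M d X K \<longrightarrow>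
        L_sq M d X (s_d d) q \<le> ennreal (C * real d * ln (real d))))
  \<and> (\<forall>q p Kp. q \<ge> 2 \<longrightarrow> p \<ge> 2 * q \<longrightarrow> (\<exists>C. \<forall>d M X. d \<ge> 1 \<longrightarrow> rand_vec M d X \<longrightarrow> moment_cond M d X p Kp \<longrightarrow>
        L_sq M d X (s_d d) q \<le> ennreal (C * real d powr (1 + 1 / (2 * q)))))
  \<and> (\<forall>q K. q \<ge> 2 \<longrightarrow> K > 0 \<longrightarrow> (\<exists>C. \<forall>d M X. d \<ge> 1 \<longrightarrow> rand_vec M d X \<longrightarrow> subgauss_cond M d X K \<longrightarrow>
        L_sq M d X 2 q \<le> ennreal (C * real d)))
  \<and> (\<forall>q K. q \<ge> 2 \<longrightarrow> K > 0 \<longrightarrow> (\<exists>C. \<forall>d M X. d \<ge> 1 \<longrightarrow> rand_vec M d X \<longrightarrow> subexp_cond M d X K \<longrightarrow>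
        L_sq M d X 2 q \<le> ennreal (C * real d)))
  \<and> (\<forall>q p Kp. q \<ge> 2 \<longrightarrow> p \<ge> 2 * q \<longrightarrow> (\<exists>C. \<forall>d M X. d \<ge> 1 \<longrightarrow> rand_vec M d X \<longrightarrow> moment_cond M d X p Kp \<longrightarrow>
        L_sq M d X 2 q \<le> ennreal (C * real d)))"
  using part_i part_ii part_iii part_iv_sg part_iv_se part_iv_mc by blast

end
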